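(* Let $\mathscr{H}$ be a complex Hilbert space and $A\in\mathbb{B}(\mathscr{H})$. Then $$r(A)\leq\left\{\frac{1}{4}\left\||A^2|^2+|(A^* )^2|^2\right\|+\frac{1}{2}\,w(A^4)\right\}^{1/4}.$$
   Context: For $T\in\mathbb{B}(\mathscr{H})$, $|T|=(T^*T)^{1/2}$, $\|T\|$ is the operator norm, $r(T)$ is the spectral radius and $w(T)=\sup\{|\langle Tx,x\rangle|: \|x\|=1\}$ is the numerical radius. *)

theory Defs
  imports "HOL-Analysis.Analysis"
begin

class complex_inner = real_normed_vector +
  fixes scaleC :: "complex \<Rightarrow> 'a \<Rightarrow> 'a"
    and cinner :: "'a \<Rightarrow> 'a \<Rightarrow> complex"
  assumes scaleC_add_right: "scaleC a (x + y) = scaleC a x + scaleC a y"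
    and scaleC_add_left: "scaleC (a + b) x = scaleC a x + scaleC b x"
    and scaleC_scaleC: "scaleC a (scaleC b x) = scaleC (a * b) x"
    and scaleC_one: "scaleC 1 x = x"
    and scaleR_scaleC: "scaleR r x = scaleC (complex_of_real r) x"
    and cinner_commute: "cinner x y = cnj (cinner y x)"
    and cinner_add_left: "cinner (x + y) z = cinner x z + cinner y z"
    and cinner_scaleC_left: "cinner (scaleC c x) y = cnj c * cinner x y"
    and cinner_self_real: "Im (cinner x x) = 0"
    and cinner_self_nonneg: "0 \<le> Re (cinner x x)"
    and cinner_self_eq_zero: "cinner x x = 0 \<longleftrightarrow> x = 0"
    and norm_eq_sqrt_cinner: "norm x = sqrt (Re (cinner x x))"

text \<open>A complex Hilbert space is a complete complex inner product space:
  type class constraint complex_inner plus complete_space.\<close>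

definition bounded_clinear :: "('a::complex_inner \<Rightarrow> 'b::complex_inner) \<Rightarrow> bool" where
  "bounded_clinear T \<longleftrightarrow> bounded_linear T \<and> (\<forall>c x. T (scaleC c x) = scaleC c (T x))"

definition adj :: "('a::complex_inner \<Rightarrow> 'a) \<Rightarrow> ('a \<Rightarrow> 'a)" where
  "adj T = (SOME S. \<forall>x y. cinner (T x) y = cinner x (S y))"

definition abssq :: "('a::complex_inner \<Rightarrow> 'a) \<Rightarrow> ('a \<Rightarrow> 'a)" where
  "abssq T = adj T \<circ> T"

definition cspectrum :: "('a::complex_inner \<Rightarrow> 'a) \<Rightarrow> complex set" where
  "cspectrum T = {l. \<not> (\<exists>S. bounded_clinear S \<and>
        S \<circ> (\<lambda>x. T x - scaleC l x) = id \<and> (\<lambda>x. T x - scaleC l x) \<circ> S = id)}"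

definition spectral_radius :: "('a::complex_inner \<Rightarrow> 'a) \<Rightarrow> real" where
  "spectral_radius T = (if cspectrum T = {} then 0 else Sup (cmod ` cspectrum T))"

definition numerical_radius :: "('a::complex_inner \<Rightarrow> 'a) \<Rightarrow> real" where
  "numerical_radius T = (if {x::'a. norm x = 1} = {} then 0
      else Sup ((\<lambda>x. cmod (cinner (T x) x)) ` {x. norm x = 1}))"

end

theory Submission
  imports Defs
begin



lemma cinner_add_right: "cinner x (y + z) = cinner x y + cinner x z"
  by (metis cinner_commute cinner_add_left complex_cnj_add)

lemma cinner_scaleC_right: "cinner x (scaleC c y) = c * cinner x y"
  by (metis cinner_commute cinner_scaleC_left complex_cnj_cnj complex_cnj_mult)

lemma cinner_zero_left[simp]: "cinner 0 y = 0"
  using cinner_add_left[of 0 0 y] by simp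

lemma cinner_zero_right[simp]: "cinner y 0 = 0"
  using cinner_add_right[of y 0 0] by simp

lemma cinner_minus_left[simp]: "cinner (- x) y = - cinner x y"
proof -
  have "cinner x y + cinner (-x) y = 0" using cinner_add_left[of x "-x" y] by simp
  then show ?thesis by (simp add: eq_neg_iff_add_eq_0 add.commute)
qed

lemma cinner_minus_right[simp]: "cinner y (- x) = - cinner y x"
proof -
  have "cinner y x + cinner y (-x) = 0" using cinner_add_right[of y x "-x"] by simp
  then show ?thesis by (simp add: eq_neg_iff_add_eq_0 add.commute)
qed

lemma cinner_diff_left: "cinner (x - y) z = cinner x z - cinner y z"
  using cinner_add_left[of x "-y" z] by simp

lemma cinner_diff_right: "cinner z (x - y) = cinner z x - cinner z y"
  using cinner_add_right[of z x "-y"] by simp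

lemma cinner_scaleR_left: "cinner (scaleR r x) y = of_real r * cinner x y"
  by (simp add: scaleR_scaleC cinner_scaleC_left)

lemma cinner_scaleR_right: "cinner y (scaleR r x) = of_real r * cinner y x"
  by (simp add: scaleR_scaleC cinner_scaleC_right)

lemma cinner_self_eq: "cinner x x = complex_of_real ((norm x)\<^sup>2)"
proof -
  have "(norm x)\<^sup>2 = Re (cinner x x)" using norm_eq_sqrt_cinner[of x] cinner_self_nonneg[of x] by simp
  then show ?thesis using cinner_self_real[of x] by (simp add: complex_eq_iff)
qed

lemma scaleC_zero_right[simp]: "scaleC c 0 = 0"
  using scaleC_add_right[of c 0 0] by simp

lemma scaleC_zero_left[simp]: "scaleC 0 x = 0"
  using scaleC_add_left[of 0 0 x] by simp

lemma scaleC_minus_right: "scaleC c (- x) = - scaleC c x"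
proof -
  have "scaleC c x + scaleC c (-x) = 0" using scaleC_add_right[of c x "-x"] by simp
  then show ?thesis by (simp add: eq_neg_iff_add_eq_0 add.commute)
qed

lemma scaleC_diff_right: "scaleC c (x - y) = scaleC c x - scaleC c y"
  using scaleC_add_right[of c x "-y"] by (simp add: scaleC_minus_right)

lemma scaleC_minus_left: "scaleC (- c) x = - scaleC c x"
proof -
  have "scaleC c x + scaleC (-c) x = 0" using scaleC_add_left[of c "-c" x] by simp
  then show ?thesis by (simp add: eq_neg_iff_add_eq_0 add.commute)
qed

lemma scaleC_diff_left: "scaleC (a - b) x = scaleC a x - scaleC b x"
  using scaleC_add_left[of a "-b" x] by (simp add: scaleC_minus_left)

lemma cinner_ext: "(\<And>z. cinner z x = cinner z y) \<Longrightarrow> x = y"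
  by (metis cinner_diff_right cinner_self_eq_zero right_minus_eq)

lemma norm_sq_eq: "(norm x)\<^sup>2 = Re (cinner x x)"
  by (simp add: cinner_self_eq)

lemma norm_scaleC: "norm (scaleC c x) = cmod c * norm x"
proof -
  have e1: "cnj c * c = of_real ((cmod c)\<^sup>2)" by (metis complex_norm_square mult.commute)
  have e2: "cinner x x = of_real ((norm x)\<^sup>2)" by (rule cinner_self_eq)
  have "(norm (scaleC c x))\<^sup>2 = Re (cnj c * c * cinner x x)"
    by (simp only: norm_sq_eq cinner_scaleC_left cinner_scaleC_right mult.assoc mult.left_commute)
  also have "\<dots> = Re (of_real ((cmod c)\<^sup>2) * of_real ((norm x)\<^sup>2))"
    by (simp only: e1 e2)
  also have "\<dots> = (cmod c)\<^sup>2 * (norm x)\<^sup>2"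
    by (simp only: of_real_mult[symmetric] Re_complex_of_real)
  also have "\<dots> = (cmod c * norm x)\<^sup>2" by (simp add: power_mult_distrib)
  finally show ?thesis by (simp add: power2_eq_iff_nonneg)
qed

lemma cauchy_schwarz: "cmod (cinner x y) \<le> norm x * norm y"
proof (cases "y = 0")
  case True then show ?thesis by simp
next
  case False
  define a where "a = (norm y)\<^sup>2"
  define c where "c = cinner y x"
  have a: "a > 0" using False by (simp add: a_def)
  define z where "z = x - scaleC (c / a) y"
  have "cinner z z = cinner x x - (c/a) * cinner x y - cnj (c/a) * cinner y x + cnj (c/a) * (c/a) * cinner y y"
    by (simp add: z_def cinner_diff_left cinner_diff_right cinner_scaleC_left cinner_scaleC_right algebra_simps)
  also have "\<dots> = cinner x x - c * cnj c / a"
  proof -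
    have e1: "cinner x y = cnj c" unfolding c_def by (rule cinner_commute)
    have e2: "cinner y y = of_real a" by (simp add: a_def cinner_self_eq)
    have e3: "cnj (c / of_real a) = cnj c / of_real a" by simp
    have e4: "cinner y x = c" by (simp add: c_def)
    show ?thesis unfolding e1 e2 e3 e4 using a by (simp add: field_simps)
  qed
  finally have "0 \<le> Re (cinner x x - c * cnj c / a)"
    by (metis cinner_self_nonneg)
  then have "(cmod c)^2 / a \<le> (norm x)^2"
    by (simp add: cinner_self_eq complex_mult_cnj cmod_power2 del: of_real_power)
  then have "(cmod c)^2 \<le> (norm x * norm y)^2" using a
    by (simp add: a_def field_simps power_mult_distrib)
  then have "cmod c \<le> norm x * norm y"
    using power2_le_imp_le by fastforce
  then show ?thesis by (metis c_def cinner_commute complex_mod_cnj)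
qed

lemma norm_add_sq: "(norm (x + y))\<^sup>2 = (norm x)\<^sup>2 + (norm y)\<^sup>2 + 2 * Re (cinner x y)"
proof -
  have "Re (cinner y x) = Re (cinner x y)" by (subst cinner_commute) simp
  then show ?thesis by (simp add: norm_sq_eq cinner_add_left cinner_add_right)
qed

lemma norm_diff_sq: "(norm (x - y))\<^sup>2 = (norm x)\<^sup>2 + (norm y)\<^sup>2 - 2 * Re (cinner x y)"
  using norm_add_sq[of x "-y"] by simp



lemma aux_par_real:
  fixes d a b s e ei ej :: real
  assumes "0 \<le> d" "0 \<le> a" "a \<le> d + ei" "0 \<le> b" "b \<le> d + ej" "0 < ei" "ei \<le> e" "0 < ej" "ej \<le> e" "e \<le> 1"
    and "s\<^sup>2 \<le> 2 * a\<^sup>2 + 2 * b\<^sup>2 - 4 * d\<^sup>2"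
  shows "s\<^sup>2 \<le> 4 * (2 * d + 1) * e"
proof -
  have "a\<^sup>2 \<le> (d + e)\<^sup>2" using assms by (intro power_mono) auto
  moreover have "b\<^sup>2 \<le> (d + e)\<^sup>2" using assms by (intro power_mono) auto
  moreover have "e\<^sup>2 \<le> e" using assms by (simp add: power2_eq_square mult_le_cancel_left1)
  ultimately have "s\<^sup>2 \<le> 4 * (d + e)\<^sup>2 - 4 * d\<^sup>2" using assms(11) by linarith
  also have "\<dots> = 4 * (2 * d * e + e\<^sup>2)" by (simp add: power2_eq_square algebra_simps)
  also have "\<dots> \<le> 4 * (2 * d * e + e)" using \<open>e\<^sup>2 \<le> e\<close> by simp
  also have "\<dots> = 4 * (2 * d + 1) * e" by (simp add: algebra_simps)
  finally show ?thesis .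
qed

lemma projection:
  fixes M :: "'a::{complex_inner,complete_space} set" and z :: 'a
  assumes cl: "closed M" and M0: "0 \<in> M" and Madd: "\<And>x y. x\<in>M \<Longrightarrow> y\<in>M \<Longrightarrow> x+y \<in> M"
    and Msc: "\<And>c x. x\<in>M \<Longrightarrow> scaleC c x \<in> M"
  shows "\<exists>m\<in>M. \<forall>u\<in>M. cinner u (z - m) = 0"
proof -
  define D where "D = (\<lambda>m. norm (z - m)) ` M"
  define d where "d = Inf D"
  define e where "e = (\<lambda>n::nat. 1 / real (Suc n))"
  have epos: "\<And>n. 0 < e n" by (simp add: e_def)
  have emono: "\<And>n N. N \<le> n \<Longrightarrow> e n \<le> e N" by (simp add: e_def frac_le)
  have e1: "\<And>n. e n \<le> 1" by (simp add: e_def)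
  have Dne: "D \<noteq> {}" using M0 by (auto simp: D_def)
  have Dbdd: "bdd_below D" unfolding bdd_below_def D_def by (intro exI[of _ 0]) auto
  have dle: "\<And>m. m \<in> M \<Longrightarrow> d \<le> norm (z - m)"
    using cInf_lower[OF _ Dbdd] by (auto simp: d_def D_def)
  have d0: "0 \<le> d" unfolding d_def by (rule cInf_greatest[OF Dne]) (auto simp: D_def)
  have Msr: "\<And>r x. x \<in> M \<Longrightarrow> scaleR r x \<in> M" by (simp add: scaleR_scaleC Msc)
  have "\<forall>n. \<exists>m. m \<in> M \<and> norm (z - m) < d + e n"
  proof
    fix n
    have "Inf D < d + e n" using epos[of n] by (simp add: d_def)
    then show "\<exists>m. m \<in> M \<and> norm (z - m) < d + e n"
      using cInf_less_iff[OF Dne Dbdd] by (auto simp: D_def)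
  qed
  then obtain f where fM: "\<And>n. f n \<in> M" and fd: "\<And>n. norm (z - f n) < d + e n"
    by metis
  have par: "(norm (f i - f j))\<^sup>2 \<le> 2 * (norm (z - f i))\<^sup>2 + 2 * (norm (z - f j))\<^sup>2 - 4 * d\<^sup>2" for i j
  proof -
    define a where "a = z - f i"
    define b where "b = z - f j"
    define mid where "mid = scaleR (1/2) (f i + f j)"
    have midM: "mid \<in> M" unfolding mid_def using fM Madd Msr by blast
    have ab: "a + b = scaleR 2 (z - mid)" by (simp add: a_def b_def mid_def algebra_simps scaleR_2)
    have "2 * d \<le> norm (a + b)" unfolding ab using dle[OF midM] by simp
    then have "(2 * d)\<^sup>2 \<le> (norm (a + b))\<^sup>2"
      using d0 by (intro power_mono) auto
    then have "4 * d\<^sup>2 \<le> (norm (a + b))\<^sup>2" by (simp add: power_mult_distrib)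
    moreover have "(norm (a - b))\<^sup>2 + (norm (a + b))\<^sup>2 = 2 * (norm a)\<^sup>2 + 2 * (norm b)\<^sup>2"
      by (simp add: norm_add_sq norm_diff_sq)
    moreover have "norm (a - b) = norm (f i - f j)" by (simp add: a_def b_def norm_minus_commute)
    ultimately show ?thesis by (simp add: a_def b_def)
  qed
  have "Cauchy f"
  proof (rule metric_CauchyI)
    fix eps :: real assume eps: "0 < eps"
    obtain N :: nat where N: "4 * (2 * d + 1) / eps\<^sup>2 < real N" using reals_Archimedean2 by blast
    have eN: "4 * (2 * d + 1) * e N < eps\<^sup>2"
    proof -
      have "4 * (2 * d + 1) < eps\<^sup>2 * real N" using N eps by (simp add: field_simps)
      also have "\<dots> \<le> eps\<^sup>2 * real (Suc N)" using eps by simp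
      finally show ?thesis by (simp add: e_def field_simps)
    qed
    show "\<exists>M. \<forall>m\<ge>M. \<forall>n\<ge>M. dist (f m) (f n) < eps"
    proof (intro exI allI impI)
      fix i j assume ij: "N \<le> i" "N \<le> j"
      have "(norm (f i - f j))\<^sup>2 \<le> 4 * (2 * d + 1) * e N"
        apply (rule aux_par_real[OF d0 _ _ _ _ epos[of i] emono[OF ij(1)] epos[of j] emono[OF ij(2)] e1 par])
        using fd[of i] fd[of j] by auto
      then have "(norm (f i - f j))\<^sup>2 < eps\<^sup>2" using eN by linarith
      then have "norm (f i - f j) < eps" using eps by (simp add: power_less_imp_less_base)
      then show "dist (f i) (f j) < eps" by (simp add: dist_norm)
    qed
  qed
  then obtain m where fm: "f \<longlonglongrightarrow> m" using Cauchy_convergent convergent_def by blast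
  have mM: "m \<in> M" using closed_sequentially[OF cl fM fm] .
  have "norm (z - m) \<le> d"
  proof (rule LIMSEQ_le)
    show "(\<lambda>n. norm (z - f n)) \<longlonglongrightarrow> norm (z - m)" by (intro tendsto_intros fm)
    have "(\<lambda>n. 1 / real (Suc n)) \<longlonglongrightarrow> 0" using LIMSEQ_Suc[OF lim_1_over_n] by simp
    then show "(\<lambda>n. d + e n) \<longlonglongrightarrow> d" unfolding e_def using tendsto_add[of "\<lambda>_. d" d sequentially] by force
    show "\<exists>N. \<forall>n\<ge>N. norm (z - f n) \<le> d + e n" using fd less_imp_le by blast
  qed
  then have minp: "\<And>u. u \<in> M \<Longrightarrow> norm (z - m) \<le> norm (z - m - u)"
    using dle Madd[OF mM] by (metis diff_diff_eq order_trans)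
  show ?thesis
  proof (intro bexI[OF _ mM] ballI)
    fix u assume uM: "u \<in> M"
    define w where "w = z - m"
    define c where "c = cinner u w"
    define t where "t = 1 / ((norm u)\<^sup>2 + 1)"
    have tpos: "0 < (norm u)\<^sup>2 + 1" by (intro add_nonneg_pos) simp_all
    then have t: "0 < t" by (simp add: t_def)
    have q1: "(norm u)\<^sup>2 / ((norm u)\<^sup>2 + 1) \<le> 1" using tpos by (simp add: divide_le_eq_1)
    define v where "v = scaleC (of_real t * c) u"
    have vM: "v \<in> M" using Msc uM by (simp add: v_def)
    have "norm w \<le> norm (w - v)" using minp[OF vM] by (simp add: w_def)
    then have "(norm w)\<^sup>2 \<le> (norm (w - v))\<^sup>2" by (simp add: power_mono)
    also have "\<dots> = (norm w)\<^sup>2 + (norm v)\<^sup>2 - 2 * Re (cinner w v)" by (rule norm_diff_sq)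
    finally have A: "2 * Re (cinner w v) \<le> (norm v)\<^sup>2" by simp
    have wv: "cinner w v = of_real t * c * cnj c"
      by (simp add: v_def cinner_scaleC_right c_def cinner_commute[of u w])
    have Rwv: "Re (cinner w v) = t * (cmod c)\<^sup>2"
    proof -
      have "of_real t * c * cnj c = of_real (t * (cmod c)\<^sup>2)"
        by (simp only: mult.assoc complex_norm_square[symmetric] of_real_mult)
      then show ?thesis unfolding wv by (simp only: Re_complex_of_real)
    qed
    have nv: "norm v = t * cmod c * norm u"
      using t by (simp add: v_def norm_scaleC norm_mult)
    have "2 * t * (cmod c)\<^sup>2 \<le> t\<^sup>2 * (cmod c)\<^sup>2 * (norm u)\<^sup>2"
      using A unfolding Rwv nv by (simp add: power_mult_distrib mult.assoc)
    moreover have "2 * t * (cmod c)\<^sup>2 = t * (2 * (cmod c)\<^sup>2)" by simp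
    moreover have "t\<^sup>2 * (cmod c)\<^sup>2 * (norm u)\<^sup>2 = t * (t * (cmod c)\<^sup>2 * (norm u)\<^sup>2)"
      by (simp add: power2_eq_square)
    ultimately have "t * (2 * (cmod c)\<^sup>2) \<le> t * (t * (cmod c)\<^sup>2 * (norm u)\<^sup>2)" by simp
    then have "2 * (cmod c)\<^sup>2 \<le> t * (cmod c)\<^sup>2 * (norm u)\<^sup>2"
      using t by (rule mult_left_le_imp_le)
    also have "\<dots> = (cmod c)\<^sup>2 * ((norm u)\<^sup>2 / ((norm u)\<^sup>2 + 1))"
      by (simp add: t_def)
    also have "\<dots> \<le> (cmod c)\<^sup>2 * 1"
      by (intro mult_left_mono q1) auto
    finally have "(cmod c)\<^sup>2 \<le> 0" by simp
    then show "cinner u (z - m) = 0" by (simp add: c_def w_def)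
  qed
qed



lemma bcl_bl: "bounded_clinear T \<Longrightarrow> bounded_linear T"
  by (simp add: bounded_clinear_def)

lemma bcl_scaleC: "bounded_clinear T \<Longrightarrow> T (scaleC c x) = scaleC c (T x)"
  by (simp add: bounded_clinear_def)

lemma bcl_add: "bounded_clinear T \<Longrightarrow> T (x + y) = T x + T y"
  by (simp add: bounded_clinear_def linear_add bounded_linear.linear)

lemma bcl_diff: "bounded_clinear T \<Longrightarrow> T (x - y) = T x - T y"
  by (simp add: bounded_clinear_def linear_diff bounded_linear.linear)

lemma bcl_zero: "bounded_clinear T \<Longrightarrow> T 0 = 0"
  by (simp add: bounded_clinear_def linear_0 bounded_linear.linear)

lemma bcl_compose: "bounded_clinear T \<Longrightarrow> bounded_clinear U \<Longrightarrow> bounded_clinear (T \<circ> U)"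
  using bounded_linear_compose[of T U] unfolding bounded_clinear_def o_def by simp

lemma bl_scaleC: "bounded_linear (\<lambda>x::'a::complex_inner. scaleC l x)"
proof (rule bounded_linear_intro[where K = "cmod l"])
  show "scaleC l (x + y) = scaleC l x + scaleC l y" for x y :: 'a by (rule scaleC_add_right)
  show "scaleC l (scaleR r x) = scaleR r (scaleC l x)" for r and x :: 'a
    by (simp add: scaleR_scaleC scaleC_scaleC mult.commute)
  show "norm (scaleC l x) \<le> norm x * cmod l" for x :: 'a by (simp add: norm_scaleC mult.commute)
qed

lemma bcl_shift: "bounded_clinear T \<Longrightarrow> bounded_clinear (\<lambda>x. T x - scaleC l x)"
  unfolding bounded_clinear_def
  by (auto intro!: bounded_linear_sub bl_scaleC simp: scaleC_diff_right scaleC_scaleC mult.commute)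

lemma bcl_shift_plus: "bounded_clinear T \<Longrightarrow> bounded_clinear (\<lambda>x. T x + scaleC l x)"
  unfolding bounded_clinear_def
  by (auto intro!: bounded_linear_add bl_scaleC simp: scaleC_add_right scaleC_scaleC mult.commute)

lemma cinner_scaleR_both: "cinner (scaleR r x) (scaleR r x) = of_real (r * r) * cinner x x"
  by (simp add: cinner_scaleR_left cinner_scaleR_right)

lemma nr_facts:
  fixes T :: "'a::complex_inner \<Rightarrow> 'a"
  assumes T: "bounded_linear T"
  shows "0 \<le> numerical_radius T"
    and "cmod (cinner (T x) x) \<le> numerical_radius T * (norm x)\<^sup>2"
proof -
  define U where "U = {x::'a. norm x = 1}"
  define V where "V = (\<lambda>x. cmod (cinner (T x) x)) ` U"
  have bdd: "bdd_above V"
    unfolding bdd_above_def V_def U_def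
  proof (intro exI[of _ "onorm T"] ballI)
    fix v assume "v \<in> (\<lambda>x. cmod (cinner (T x) x)) ` {x. norm x = 1}"
    then obtain x where x: "norm x = 1" "v = cmod (cinner (T x) x)" by auto
    have "v \<le> norm (T x) * norm x" unfolding x(2) by (rule cauchy_schwarz)
    also have "\<dots> \<le> onorm T * norm x * norm x" using onorm[OF T] by (simp add: mult_right_mono)
    finally show "v \<le> onorm T" using x by simp
  qed
  have nr: "numerical_radius T = (if U = {} then 0 else Sup V)"
    by (simp add: numerical_radius_def U_def V_def)
  show nn: "0 \<le> numerical_radius T"
  proof (cases "U = {}")
    case False
    then obtain u where "u \<in> U" by auto
    then have "0 \<le> Sup V" using cSup_upper2[OF _ _ bdd, of "cmod (cinner (T u) u)" 0] by (auto simp: V_def)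
    then show ?thesis using nr False by simp
  qed (simp add: nr)
  show "cmod (cinner (T x) x) \<le> numerical_radius T * (norm x)\<^sup>2"
  proof (cases "x = 0")
    case True then show ?thesis using T by (simp add: linear_0 bounded_linear.linear)
  next
    case False
    define u where "u = scaleR (1 / norm x) x"
    have u: "norm u = 1" using False by (simp add: u_def)
    then have Une: "U \<noteq> {}" by (auto simp: U_def)
    have "cmod (cinner (T u) u) \<le> Sup V" using u by (intro cSup_upper[OF _ bdd]) (auto simp: V_def U_def)
    also have "\<dots> = numerical_radius T" using nr Une by simp
    finally have A: "cmod (cinner (T u) u) \<le> numerical_radius T" .
    have Tu: "T u = scaleR (1 / norm x) (T x)"
      by (simp add: u_def linear_scale bounded_linear.linear[OF T])
    have "cinner (T u) u = of_real (1 / norm x) * (of_real (1 / norm x) * cinner (T x) x)"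
      unfolding Tu by (simp only: u_def cinner_scaleR_left cinner_scaleR_right)
    then have "cmod (cinner (T u) u) = cmod (cinner (T x) x) / (norm x)\<^sup>2"
      by (simp add: norm_mult norm_divide power2_eq_square)
    then have e: "cmod (cinner (T x) x) = cmod (cinner (T u) u) * (norm x)\<^sup>2"
      using False by (simp add: field_simps)
    show ?thesis unfolding e by (rule mult_right_mono[OF A]) simp
  qed
qed

lemma nr_le:
  fixes T :: "'a::complex_inner \<Rightarrow> 'a"
  assumes "\<And>x. norm x = 1 \<Longrightarrow> cmod (cinner (T x) x) \<le> c" and "0 \<le> c"
  shows "numerical_radius T \<le> c"
  unfolding numerical_radius_def using assms by (auto intro!: cSup_least)

lemma coercive_invertible:
  fixes B :: "'a::{complex_inner,complete_space} \<Rightarrow> 'a"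
  assumes B: "bounded_clinear B" and d: "0 < d"
    and coer: "\<And>x. d * (norm x)\<^sup>2 \<le> cmod (cinner (B x) x)"
  shows "\<exists>S. bounded_clinear S \<and> S \<circ> B = id \<and> B \<circ> S = id"
proof -
  have BL: "bounded_linear B" using B by (rule bcl_bl)
  have low: "d * norm x \<le> norm (B x)" for x
  proof (cases "x = 0")
    case True then show ?thesis by simp
  next
    case False
    have "d * norm x * norm x \<le> norm (B x) * norm x"
      using coer[of x] cauchy_schwarz[of "B x" x] by (simp add: power2_eq_square)
    then show ?thesis using False by simp
  qed
  have injB: "inj B"
  proof (rule injI)
    fix x y assume "B x = B y"
    then have "B (x - y) = 0" using bcl_diff[OF B] by simp
    then have "norm (x - y) \<le> 0" using low[of "x - y"] d by (simp add: mult_le_0_iff)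
    then show "x = y" by simp
  qed
  have cl: "closed (range B)"
  proof (rule closed_sequential_limits[THEN iffD2], intro allI impI, elim conjE)
    fix y l assume yR: "\<forall>n. y n \<in> range B" and yl: "y \<longlonglongrightarrow> l"
    have "\<forall>n. \<exists>x. y n = B x" using yR by blast
    from choice[OF this] obtain x where xy0: "\<forall>n. y n = B (x n)" by blast
    then have xy: "\<And>n. y n = B (x n)" by blast
    have "Cauchy y" using yl by (rule LIMSEQ_imp_Cauchy)
    have "Cauchy x"
    proof (rule metric_CauchyI)
      fix e :: real assume e: "0 < e"
      have de: "0 < d * e" using d e by simp
      obtain M where M: "\<forall>m\<ge>M. \<forall>n\<ge>M. dist (y m) (y n) < d * e"
        using metric_CauchyD[OF \<open>Cauchy y\<close> de] by blast
      show "\<exists>M. \<forall>m\<ge>M. \<forall>n\<ge>M. dist (x m) (x n) < e"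
      proof (intro exI[of _ M] allI impI)
        fix m n assume "M \<le> m" "M \<le> n"
        then have "norm (B (x m) - B (x n)) < d * e" using M xy by (simp add: dist_norm)
        then have "d * norm (x m - x n) < d * e" using low[of "x m - x n"] bcl_diff[OF B] by simp
        then show "dist (x m) (x n) < e" using d by (simp add: dist_norm)
      qed
    qed
    then obtain x0 where "x \<longlonglongrightarrow> x0" using Cauchy_convergent convergent_def by blast
    then have "(\<lambda>n. B (x n)) \<longlonglongrightarrow> B x0" by (rule bounded_linear.tendsto[OF BL])
    moreover have "y = (\<lambda>n. B (x n))" using xy by (simp add: fun_eq_iff)
    ultimately have "y \<longlonglongrightarrow> B x0" by simp
    then have "l = B x0" using yl LIMSEQ_unique by blast
    then show "l \<in> range B" by simp
  qed
  have surjB: "surj B"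
  proof -
    have "z \<in> range B" for z
    proof -
      have "\<exists>m\<in>range B. \<forall>u\<in>range B. cinner u (z - m) = 0"
      proof (rule projection[OF cl])
        have "B 0 \<in> range B" by (rule rangeI)
        then show "0 \<in> range B" using bcl_zero[OF B] by simp
        show "x + y \<in> range B" if xr: "x \<in> range B" and yr: "y \<in> range B" for x y
        proof -
          obtain a b where ab: "x = B a" "y = B b" using xr yr by blast
          have "B (a + b) \<in> range B" by (rule rangeI)
          then show ?thesis using ab bcl_add[OF B] by simp
        qed
        show "scaleC c x \<in> range B" if xr: "x \<in> range B" for c x
        proof -
          obtain a where a: "x = B a" using xr by blast
          have "B (scaleC c a) \<in> range B" by (rule rangeI)
          then show ?thesis using a bcl_scaleC[OF B] by simp
        qed
      qed
      then obtain m where m: "m \<in> range B" and orth: "\<forall>u\<in>range B. cinner u (z - m) = 0"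
        by blast
      have "cinner (B (z - m)) (z - m) = 0" using orth by simp
      then have "d * (norm (z - m))\<^sup>2 \<le> 0" using coer[of "z - m"] by simp
      then have "z - m = 0" using d by (simp add: mult_le_0_iff)
      then show ?thesis using m by simp
    qed
    then show ?thesis by auto
  qed
  define S where "S = inv B"
  have SB: "S (B x) = x" for x using injB by (simp add: S_def)
  have BS: "B (S y) = y" for y using surjB by (simp add: S_def surj_f_inv_f)
  have Sadd: "S (x + y) = S x + S y" for x y
  proof -
    have "B (S (x + y)) = B (S x + S y)" using BS bcl_add[OF B] by simp
    then show ?thesis by (rule injD[OF injB])
  qed
  have SscC: "S (scaleC c x) = scaleC c (S x)" for c x
  proof -
    have "B (S (scaleC c x)) = B (scaleC c (S x))" using BS bcl_scaleC[OF B] by simp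
    then show ?thesis by (rule injD[OF injB])
  qed
  have "bounded_linear S"
  proof (rule bounded_linear_intro[where K = "1 / d"])
    show "S (x + y) = S x + S y" for x y by (rule Sadd)
    show "S (scaleR r x) = scaleR r (S x)" for r x by (simp add: scaleR_scaleC SscC)
    show "norm (S x) \<le> norm x * (1 / d)" for x
      using low[of "S x"] BS[of x] d by (simp add: field_simps)
  qed
  then have "bounded_clinear S" using SscC by (simp add: bounded_clinear_def)
  moreover have "S \<circ> B = id" "B \<circ> S = id" using SB BS by auto
  ultimately show ?thesis by blast
qed

lemma spec_le_nr:
  fixes T :: "'a::{complex_inner,complete_space} \<Rightarrow> 'a"
  assumes T: "bounded_clinear T" and l: "l \<in> cspectrum T"
  shows "cmod l \<le> numerical_radius T"
proof (rule ccontr)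
  assume "\<not> cmod l \<le> numerical_radius T"
  then have d: "0 < cmod l - numerical_radius T" by simp
  define B where "B = (\<lambda>x. T x - scaleC l x)"
  have B: "bounded_clinear B" unfolding B_def by (rule bcl_shift[OF T])
  have "(cmod l - numerical_radius T) * (norm x)\<^sup>2 \<le> cmod (cinner (B x) x)" for x
  proof -
    have e: "cinner (B x) x = cinner (T x) x - cnj l * of_real ((norm x)\<^sup>2)"
      by (simp add: B_def cinner_diff_left cinner_scaleC_left cinner_self_eq)
    have "cmod (cnj l * of_real ((norm x)\<^sup>2)) = cmod l * (norm x)\<^sup>2"
      by (simp add: norm_mult norm_power)
    moreover have "cmod (cinner (T x) x) \<le> numerical_radius T * (norm x)\<^sup>2"
      using nr_facts(2)[OF bcl_bl[OF T]] .
    moreover have "cmod (cnj l * of_real ((norm x)\<^sup>2)) - cmod (cinner (T x) x) \<le> cmod (cinner (B x) x)"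
      unfolding e by (metis norm_minus_commute norm_triangle_ineq2)
    ultimately show ?thesis by (simp add: algebra_simps)
  qed
  then obtain S where "bounded_clinear S \<and> S \<circ> B = id \<and> B \<circ> S = id"
    using coercive_invertible[OF B d] by blast
  then show False using l by (auto simp: cspectrum_def B_def)
qed

lemma spec_sq:
  fixes C :: "'a::complex_inner \<Rightarrow> 'a"
  assumes C: "bounded_clinear C" and l: "l \<in> cspectrum C"
  shows "l\<^sup>2 \<in> cspectrum (C \<circ> C)"
proof (rule ccontr)
  assume "l\<^sup>2 \<notin> cspectrum (C \<circ> C)"
  then obtain S where S: "bounded_clinear S" and SR: "S \<circ> (\<lambda>x. (C \<circ> C) x - scaleC (l\<^sup>2) x) = id"
    and RS: "(\<lambda>x. (C \<circ> C) x - scaleC (l\<^sup>2) x) \<circ> S = id"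
    by (auto simp: cspectrum_def)
  define P where "P = (\<lambda>x. C x + scaleC l x)"
  define Q where "Q = (\<lambda>x. C x - scaleC l x)"
  have P: "bounded_clinear P" unfolding P_def by (rule bcl_shift_plus[OF C])
  have QP: "Q (P x) = C (C x) - scaleC (l\<^sup>2) x" for x
    using bcl_add[OF C] bcl_scaleC[OF C]
    by (simp add: P_def Q_def scaleC_add_right scaleC_scaleC power2_eq_square)
  have PQ: "P (Q x) = C (C x) - scaleC (l\<^sup>2) x" for x
    using bcl_diff[OF C] bcl_scaleC[OF C]
    by (simp add: P_def Q_def scaleC_diff_right scaleC_scaleC power2_eq_square)
  define S' where "S' = P \<circ> S"
  have 1: "Q (S' y) = y" for y using RS QP by (simp add: S'_def fun_eq_iff)
  have 2: "S (P (Q x)) = x" for x using SR PQ by (simp add: fun_eq_iff)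
  have 3: "S' (Q x) = x" for x
  proof -
    have "S' (Q x) = S (P (Q (S' (Q x))))" using 2 by simp
    also have "\<dots> = S (P (Q x))" using 1 by simp
    also have "\<dots> = x" using 2 by simp
    finally show ?thesis .
  qed
  have "bounded_clinear S'" unfolding S'_def by (rule bcl_compose[OF P S])
  moreover have "S' \<circ> Q = id" "Q \<circ> S' = id" using 1 3 by auto
  ultimately show False using l by (auto simp: cspectrum_def Q_def)
qed



lemma riesz:
  fixes f :: "'a::{complex_inner,complete_space} \<Rightarrow> complex"
  assumes fadd: "\<And>x y. f (x + y) = f x + f y" and fsc: "\<And>c x. f (scaleC c x) = c * f x"
    and fb: "\<And>x. cmod (f x) \<le> norm x * K"
  shows "\<exists>v. \<forall>x. f x = cinner v x"
proof (cases "\<forall>x. f x = 0")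
  case True then show ?thesis by (intro exI[of _ 0]) simp
next
  case False
  then obtain z where fz: "f z \<noteq> 0" by auto
  have fbl: "bounded_linear f"
    by (rule bounded_linear_intro[where K = K]) (auto simp: fadd scaleR_scaleC fsc fb scaleR_conv_of_real)
  have fdiff: "f (x - y) = f x - f y" for x y using fbl by (simp add: linear_diff bounded_linear.linear)
  have f0: "f 0 = 0" using fbl by (simp add: linear_0 bounded_linear.linear)
  define M where "M = {x. f x = 0}"
  have cl: "closed M" unfolding M_def
    by (rule closed_Collect_eq) (auto intro: linear_continuous_on fbl)
  obtain m where mM: "m \<in> M" and orth: "\<forall>u\<in>M. cinner u (z - m) = 0"
    using projection[OF cl, of z] by (auto simp: M_def f0 fadd fsc)
  define w where "w = z - m"
  have fw: "f w = f z" using mM by (simp add: w_def fdiff M_def)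
  have w0: "w \<noteq> 0" using fw fz f0 by auto
  define n2 where "n2 = (norm w)\<^sup>2"
  have n2: "n2 \<noteq> 0" using w0 by (simp add: n2_def)
  define v where "v = scaleC (cnj (f w) / of_real n2) w"
  have "f x = cinner v x" for x
  proof -
    define y where "y = x - scaleC (f x / f w) w"
    have "f y = 0" using fz fw by (simp add: y_def fdiff fsc)
    then have "cinner y w = 0" using orth by (simp add: M_def w_def)
    then have xw: "cinner x w = cnj (f x / f w) * of_real n2"
      by (simp add: y_def cinner_diff_left cinner_scaleC_left cinner_self_eq n2_def)
    have "cinner w x = (f x / f w) * of_real n2"
      using xw by (subst cinner_commute) simp
    then show ?thesis using n2 fz fw
      by (simp add: v_def cinner_scaleC_left)
  qed
  then show ?thesis by blast
qed

lemma adj_exists: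
  fixes T :: "'a::{complex_inner,complete_space} \<Rightarrow> 'a"
  assumes T: "bounded_clinear T"
  shows "\<exists>S. \<forall>x y. cinner (T x) y = cinner x (S y)"
proof -
  have "\<forall>y. \<exists>v. \<forall>x. cinner y (T x) = cinner v x"
  proof
    fix y
    show "\<exists>v. \<forall>x. cinner y (T x) = cinner v x"
    proof (rule riesz[where K = "norm y * onorm T"])
      show "cinner y (T (x + z)) = cinner y (T x) + cinner y (T z)" for x z
        by (simp add: bcl_add[OF T] cinner_add_right)
      show "cinner y (T (scaleC c x)) = c * cinner y (T x)" for c x
        by (simp add: bcl_scaleC[OF T] cinner_scaleC_right)
      show "cmod (cinner y (T x)) \<le> norm x * (norm y * onorm T)" for x
      proof -
        have "cmod (cinner y (T x)) \<le> norm y * norm (T x)" by (rule cauchy_schwarz)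
        also have "\<dots> \<le> norm y * (onorm T * norm x)"
          using onorm[OF bcl_bl[OF T]] by (simp add: mult_left_mono)
        finally show ?thesis by (simp add: mult_ac)
      qed
    qed
  qed
  then obtain S where S: "\<forall>y x. cinner y (T x) = cinner (S y) x" by metis
  show ?thesis
    by (intro exI[of _ S] allI) (metis S cinner_commute)
qed

lemma adj_prop:
  fixes T :: "'a::{complex_inner,complete_space} \<Rightarrow> 'a"
  assumes T: "bounded_clinear T"
  shows "cinner (T x) y = cinner x (adj T y)"
  using someI_ex[OF adj_exists[OF T]] unfolding adj_def by blast

lemma adj_unique:
  fixes T :: "'a::{complex_inner,complete_space} \<Rightarrow> 'a"
  assumes T: "bounded_clinear T" and S: "\<And>x y. cinner (T x) y = cinner x (S y)"
  shows "adj T = S"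
proof
  fix y show "adj T y = S y"
    by (rule cinner_ext) (metis S adj_prop[OF T])
qed

lemma adj_bcl:
  fixes T :: "'a::{complex_inner,complete_space} \<Rightarrow> 'a"
  assumes T: "bounded_clinear T"
  shows "bounded_clinear (adj T)"
proof -
  have add: "adj T (x + y) = adj T x + adj T y" for x y
    by (rule cinner_ext) (simp add: adj_prop[OF T, symmetric] cinner_add_right)
  have sc: "adj T (scaleC c x) = scaleC c (adj T x)" for c x
    by (rule cinner_ext) (simp add: adj_prop[OF T, symmetric] cinner_scaleC_right)
  have bd: "norm (adj T y) \<le> norm y * onorm T" for y
  proof (cases "adj T y = 0")
    case True then show ?thesis using onorm_pos_le[OF bcl_bl[OF T]] by simp
  next
    case False
    have "(norm (adj T y))\<^sup>2 = Re (cinner (T (adj T y)) y)"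
      by (simp add: norm_sq_eq adj_prop[OF T])
    also have "\<dots> \<le> cmod (cinner (T (adj T y)) y)" by (rule complex_Re_le_cmod)
    also have "\<dots> \<le> norm (T (adj T y)) * norm y" by (rule cauchy_schwarz)
    also have "\<dots> \<le> onorm T * norm (adj T y) * norm y"
      using onorm[OF bcl_bl[OF T]] by (simp add: mult_right_mono)
    finally have "norm (adj T y) * norm (adj T y) \<le> (norm y * onorm T) * norm (adj T y)"
      by (simp add: power2_eq_square mult_ac)
    then show ?thesis using False by simp
  qed
  have "bounded_linear (adj T)"
    by (rule bounded_linear_intro[where K = "onorm T"]) (auto simp: add scaleR_scaleC sc bd)
  then show ?thesis using sc by (simp add: bounded_clinear_def)
qed

lemma adj_adj:
  fixes T :: "'a::{complex_inner,complete_space} \<Rightarrow> 'a"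
  assumes T: "bounded_clinear T"
  shows "adj (adj T) = T"
proof (rule adj_unique[OF adj_bcl[OF T]])
  fix x y
  show "cinner (adj T x) y = cinner x (T y)"
    by (metis adj_prop[OF T] cinner_commute)
qed

lemma adj_comp:
  fixes T U :: "'a::{complex_inner,complete_space} \<Rightarrow> 'a"
  assumes T: "bounded_clinear T" and U: "bounded_clinear U"
  shows "adj (T \<circ> U) = adj U \<circ> adj T"
  by (rule adj_unique[OF bcl_compose[OF T U]]) (simp add: adj_prop[OF T] adj_prop[OF U])

lemma kitt:
  fixes u v x :: "'a::complex_inner"
  assumes uv: "cinner v x = cnj (cinner u x)"
  shows "4 * (cmod (cinner u x))\<^sup>2 \<le> (2 * (norm u)\<^sup>2 + 2 * (norm v)\<^sup>2) * (norm x)\<^sup>2"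
proof -
  define a where "a = cinner u x"
  have h1: "cinner (u + v) x = complex_of_real (2 * Re a)"
    by (simp add: cinner_add_left uv a_def complex_add_cnj)
  have h2: "cinner (u - v) x = complex_of_real (2 * Im a) * \<i>"
    by (simp add: cinner_diff_left uv a_def complex_diff_cnj)
  have "\<bar>2 * Re a\<bar> \<le> norm (u + v) * norm x"
    using cauchy_schwarz[of "u + v" x] unfolding h1 by simp
  then have r: "(2 * Re a)\<^sup>2 \<le> (norm (u + v) * norm x)\<^sup>2"
    by (metis abs_ge_zero power2_abs power_mono)
  have "\<bar>2 * Im a\<bar> \<le> norm (u - v) * norm x"
    using cauchy_schwarz[of "u - v" x] unfolding h2 by (simp add: norm_mult)
  then have i: "(2 * Im a)\<^sup>2 \<le> (norm (u - v) * norm x)\<^sup>2"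
    by (metis abs_ge_zero power2_abs power_mono)
  have "4 * (cmod a)\<^sup>2 = (2 * Re a)\<^sup>2 + (2 * Im a)\<^sup>2"
    by (simp add: cmod_power2 power_mult_distrib)
  also have "\<dots> \<le> ((norm (u + v))\<^sup>2 + (norm (u - v))\<^sup>2) * (norm x)\<^sup>2"
    using r i by (simp add: power_mult_distrib algebra_simps)
  also have "(norm (u + v))\<^sup>2 + (norm (u - v))\<^sup>2 = 2 * (norm u)\<^sup>2 + 2 * (norm v)\<^sup>2"
    by (simp add: norm_add_sq norm_diff_sq)
  finally show ?thesis by (simp add: a_def)
qed



theorem mainTheorem16:
  fixes A :: "'a::{complex_inner, complete_space} \<Rightarrow> 'a"
  assumes "bounded_clinear A"
  shows "spectral_radius A \<le>
    root 4 (1/4 * onorm (\<lambda>x. abssq (A ^^ 2) x + abssq (adj A ^^ 2) x)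
            + 1/2 * numerical_radius (A ^^ 4))"
proof -
  note A = assms
  define T where "T = A \<circ> A"
  have A2: "A ^^ 2 = T" by (simp add: T_def numeral_2_eq_2)
  have four: "(4::nat) = 2 + 2" by simp
  have A4: "A ^^ 4 = T \<circ> T" by (metis A2 four funpow_add)
  have Tb: "bounded_clinear T" unfolding T_def by (rule bcl_compose[OF A A])
  have adjA2: "adj A ^^ 2 = adj T"
    by (simp add: numeral_2_eq_2 T_def adj_comp[OF A A])
  define X where "X = (\<lambda>x. abssq (A ^^ 2) x + abssq (adj A ^^ 2) x)"
  have Xeq: "X x = adj T (T x) + T (adj T x)" for x
    by (simp add: X_def A2 adjA2 abssq_def adj_adj[OF Tb])
  have Xbl: "bounded_linear X"
  proof -
    have b1: "bounded_linear (\<lambda>x. adj T (T x))"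
      by (rule bounded_linear_compose[OF bcl_bl[OF adj_bcl[OF Tb]] bcl_bl[OF Tb]])
    have b2: "bounded_linear (\<lambda>x. T (adj T x))"
      by (rule bounded_linear_compose[OF bcl_bl[OF Tb] bcl_bl[OF adj_bcl[OF Tb]]])
    have "bounded_linear (\<lambda>x. adj T (T x) + T (adj T x))"
      by (rule bounded_linear_add[OF b1 b2])
    moreover have "X = (\<lambda>x. adj T (T x) + T (adj T x))" using Xeq by auto
    ultimately show ?thesis by simp
  qed
  have X0: "0 \<le> onorm X" by (rule onorm_pos_le[OF Xbl])
  have key: "cmod (cinner (T x) x) \<le> sqrt (onorm X / 2)" if x: "norm x = 1" for x
  proof -
    have c1: "cinner (adj T x) x = cnj (cinner (T x) x)"
      by (metis adj_prop[OF Tb] cinner_commute)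
    have k: "4 * (cmod (cinner (T x) x))\<^sup>2 \<le> 2 * (norm (T x))\<^sup>2 + 2 * (norm (adj T x))\<^sup>2"
      using kitt[OF c1] x by simp
    have r1: "Re (cinner (adj T (T x)) x) = (norm (T x))\<^sup>2"
      by (metis adj_prop[OF Tb] cinner_commute Re_complex_of_real cinner_self_eq complex_cnj_complex_of_real)
    have r2: "Re (cinner (T (adj T x)) x) = (norm (adj T x))\<^sup>2"
      by (simp add: adj_prop[OF Tb] norm_sq_eq)
    have "(norm (T x))\<^sup>2 + (norm (adj T x))\<^sup>2 = Re (cinner (X x) x)"
      by (simp add: Xeq cinner_add_left r1 r2)
    also have "\<dots> \<le> cmod (cinner (X x) x)" by (rule complex_Re_le_cmod)
    also have "\<dots> \<le> norm (X x) * norm x" by (rule cauchy_schwarz)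
    also have "\<dots> \<le> onorm X" using onorm[OF Xbl, of x] x by simp
    finally have "(cmod (cinner (T x) x))\<^sup>2 \<le> onorm X / 2" using k by simp
    then show ?thesis by (rule real_le_rsqrt)
  qed
  have wT: "numerical_radius T \<le> sqrt (onorm X / 2)"
    by (rule nr_le) (use key X0 in auto)
  have w0: "0 \<le> numerical_radius T" by (rule nr_facts(1)[OF bcl_bl[OF Tb]])
  have wT2: "(numerical_radius T)\<^sup>2 \<le> onorm X / 2"
  proof -
    have "(numerical_radius T)\<^sup>2 \<le> (sqrt (onorm X / 2))\<^sup>2" using wT w0 by (rule power_mono)
    then show ?thesis using X0 by simp
  qed
  define R where "R = 1/4 * onorm X + 1/2 * numerical_radius (A ^^ 4)"
  have w4: "0 \<le> numerical_radius (A ^^ 4)"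
    unfolding A4 by (rule nr_facts(1)[OF bcl_bl[OF bcl_compose[OF Tb Tb]]])
  have R0: "0 \<le> R" using X0 w4 by (simp add: R_def)
  have lam: "cmod l \<le> root 4 R" if l: "l \<in> cspectrum A" for l
  proof -
    have l2: "l\<^sup>2 \<in> cspectrum T" using spec_sq[OF A l] by (simp add: T_def)
    have l4: "(l\<^sup>2)\<^sup>2 \<in> cspectrum (T \<circ> T)" by (rule spec_sq[OF Tb l2])
    have "(cmod l)\<^sup>2 \<le> numerical_radius T"
      using spec_le_nr[OF Tb l2] by (simp add: norm_power)
    then have "((cmod l)\<^sup>2)\<^sup>2 \<le> (numerical_radius T)\<^sup>2" by (rule power_mono) simp
    then have a: "(cmod l) ^ 4 \<le> onorm X / 2" using wT2 by (simp add: power_mult[symmetric])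
    have "cmod ((l\<^sup>2)\<^sup>2) \<le> numerical_radius (A ^^ 4)"
      unfolding A4 by (rule spec_le_nr[OF bcl_compose[OF Tb Tb] l4])
    then have b: "(cmod l) ^ 4 \<le> numerical_radius (A ^^ 4)"
      by (simp add: norm_power power_mult[symmetric])
    have "(cmod l) ^ 4 \<le> R" using a b by (simp add: R_def)
    then have "root 4 ((cmod l) ^ 4) \<le> root 4 R" by (rule real_root_le_mono[rotated]) simp
    then show ?thesis by (simp add: real_root_power_cancel)
  qed
  have "spectral_radius A \<le> root 4 R"
  proof (cases "cspectrum A = {}")
    case True then show ?thesis using R0 by (simp add: spectral_radius_def real_root_ge_zero)
  next
    case False
    then have "Sup (cmod ` cspectrum A) \<le> root 4 R" by (intro cSup_least) (auto intro: lam)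
    then show ?thesis using False by (simp add: spectral_radius_def)
  qed
  then show ?thesis by (simp add: R_def X_def)
qed

end
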